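(* Let $H$ be a complex Hilbert space and $\{\mathcal{U}(t,s)\}_{t,s\in\mathbb{R}}$ a strongly continuous family of bounded linear operators on $H$ with $\mathcal{U}(t,t)=1$ and $\mathcal{U}(r,s)\mathcal{U}(t,r)=\mathcal{U}(t,s)$ for all $r,s,t\in\mathbb{R}$. For $t\in\mathbb{R}$ let $\mathcal{L}(t)x:=\lim_{h\to0}\frac1h[\mathcal{U}(t+h,t)x-x]$ on $D(\mathcal{L}(t)):=\{x:\text{the limit exists in }H\}$, and $D_\mathcal{L}:=\bigcap_{t}D(\mathcal{L}(t))$. Fix $t_0\in\mathbb{R}$ and $z\in D_\mathcal{L}$ with $z\neq0$ such that $t\mapsto\mathcal{U}(t,t_0)\mathcal{L}(t)z$ is continuous. Define $(x,y)_t:=(\mathcal{U}(t,t_0)x,\mathcal{U}(t,t_0)y)$, $\mathcal{P}(t):=(\cdot,z)_t(z,z)_t^{-1}z$, $\mathcal{Q}(t):=1-\mathcal{P}(t)$. For each $t$, let $K(t,\cdot)$ be the unique continuous solution of $$K(t,s)=-(\mathcal{U}(t,s)\mathcal{Q}(t)\mathcal{L}(t)z,\mathcal{Q}(s)\mathcal{L}(s)z)_s(z,z)_s^{-1}+\int_s^tK(t,r)\,(\mathcal{U}(r,s)z,\mathcal{Q}(s)\mathcal{L}(s)z)_s(z,z)_s^{-1}\,dr,$$ and let $\eta_{ts}:=\mathcal{U}(t,s)\mathcal{Q}(t)\mathcal{L}(t)z-\int_s^tK(t,r)\,\mathcal{U}(r,s)z\,dr$. Then for all $t,s\in\mathbb{R}$,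 $(\eta_{ts},z)_s=0$ and $K(t,s)=-(\eta_{tt_0},\eta_{st_0})(z,z)_s^{-1}$.
   Context: The scalar product $(\cdot,\cdot)$ on $H$ is conjugate-linear in its second argument. Vector-valued integrals are Bochner integrals. *)

theory Defs
  imports "HOL-Analysis.Analysis"
begin

text \<open>A complex Hilbert space: a (real) Banach space carrying a complex scalar
multiplication extending the real one, and a complex inner product which is linear
in the first and conjugate-linear in the second argument and induces the norm.\<close>

class complex_hilbert = banach +
  fixes hscale :: "complex \<Rightarrow> 'a \<Rightarrow> 'a"
    and hinner :: "'a \<Rightarrow> 'a \<Rightarrow> complex"
  assumes hscale_add_right: "hscale a (x + y) = hscale a x + hscale a y"
    and hscale_add_left: "hscale (a + b) x = hscale a x + hscale b x"
    and hscale_hscale: "hscale a (hscale b x) = hscale (a * b) x"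
    and hscale_of_real: "hscale (complex_of_real r) x = r *\<^sub>R x"
    and hinner_add_left: "hinner (x + y) z = hinner x z + hinner y z"
    and hinner_scale_left: "hinner (hscale a x) y = a * hinner x y"
    and hinner_commute: "hinner y x = cnj (hinner x y)"
    and hinner_self_norm: "hinner x x = complex_of_real ((norm x)\<^sup>2)"

definition bounded_clinear_op :: "('a::complex_hilbert \<Rightarrow> 'a) \<Rightarrow> bool" where
  "bounded_clinear_op T \<longleftrightarrow> bounded_linear T \<and> (\<forall>a x. T (hscale a x) = hscale a (T x))"

definition diffq :: "(real \<Rightarrow> real \<Rightarrow> 'a::real_normed_vector \<Rightarrow> 'a) \<Rightarrow> real \<Rightarrow> 'a \<Rightarrow> real \<Rightarrow> 'a" where
  "diffq U t x h = (1 / h) *\<^sub>R (U (t + h) t x - x)"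

definition gen_dom :: "(real \<Rightarrow> real \<Rightarrow> 'a::real_normed_vector \<Rightarrow> 'a) \<Rightarrow> real \<Rightarrow> 'a set" where
  "gen_dom U t = {x. \<exists>l. (diffq U t x \<longlongrightarrow> l) (at 0)}"

definition gen :: "(real \<Rightarrow> real \<Rightarrow> 'a::real_normed_vector \<Rightarrow> 'a) \<Rightarrow> real \<Rightarrow> 'a \<Rightarrow> 'a" where
  "gen U t x = Lim (at 0) (diffq U t x)"

definition gen_dom_all :: "(real \<Rightarrow> real \<Rightarrow> 'a::real_normed_vector \<Rightarrow> 'a) \<Rightarrow> 'a set" where
  "gen_dom_all U = (\<Inter>t. gen_dom U t)"

definition oint :: "real \<Rightarrow> real \<Rightarrow> (real \<Rightarrow> 'b::real_normed_vector) \<Rightarrow> 'b" where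
  "oint a b f = (if a \<le> b then integral {a..b} f else - integral {b..a} f)"

end

theory Submission
  imports Defs
begin


lemma hinner_zero_left[simp]:
  fixes y :: "'a::complex_hilbert"
  shows "hinner 0 y = 0"
  using hinner_add_left[of 0 0 y] by simp
lemma hinner_minus_left:
  fixes x y :: "'a::complex_hilbert"
  shows "hinner (- x) y = - hinner x y"
proof -
  have "hinner x y + hinner (- x) y = 0" using hinner_add_left[of x "-x" y] by simp
  then show ?thesis by (simp add: add_eq_0_iff)
qed
lemma hinner_diff_left:
  fixes x y z :: "'a::complex_hilbert"
  shows "hinner (x - y) z = hinner x z - hinner y z"
  using hinner_add_left[of x "-y" z] hinner_minus_left[of y z] by simp
lemma hinner_add_right:
  fixes x y z :: "'a::complex_hilbert"
  shows "hinner x (y + z) = hinner x y + hinner x z"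
  by (simp only: hinner_commute[of x "y+z"] hinner_commute[of x y] hinner_commute[of x z] hinner_add_left complex_cnj_add)
lemma hinner_zero_right[simp]:
  fixes x :: "'a::complex_hilbert"
  shows "hinner x 0 = 0"
  by (simp only: hinner_commute[of x 0] hinner_zero_left complex_cnj_zero)
lemma hinner_minus_right:
  fixes x y :: "'a::complex_hilbert"
  shows "hinner x (- y) = - hinner x y"
  by (simp only: hinner_commute[of x "-y"] hinner_commute[of x y] hinner_minus_left complex_cnj_minus)
lemma hinner_diff_right:
  fixes x y z :: "'a::complex_hilbert"
  shows "hinner x (y - z) = hinner x y - hinner x z"
  by (simp only: hinner_commute[of x "y-z"] hinner_commute[of x y] hinner_commute[of x z] hinner_diff_left complex_cnj_diff)
lemma hinner_scale_right:
  fixes x y :: "'a::complex_hilbert"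
  shows "hinner x (hscale a y) = cnj a * hinner x y"
  by (simp only: hinner_commute[of x "hscale a y"] hinner_commute[of x y] hinner_scale_left complex_cnj_mult)
lemma hinner_scaleR_left:
  fixes x y :: "'a::complex_hilbert"
  shows "hinner (r *\<^sub>R x) y = r *\<^sub>R hinner x y"
  by (simp only: hscale_of_real[symmetric] hinner_scale_left scaleR_conv_of_real)
lemma hinner_scaleR_right:
  fixes x y :: "'a::complex_hilbert"
  shows "hinner x (r *\<^sub>R y) = r *\<^sub>R hinner x y"
  by (simp only: hscale_of_real[symmetric] hinner_scale_right scaleR_conv_of_real complex_cnj_complex_of_real)

lemma hscale_zero_right[simp]:
  fixes x :: "'a::complex_hilbert"
  shows "hscale a (0::'a) = 0"
  using hscale_add_right[of a "0::'a" 0] by simp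
lemma hscale_minus_right:
  fixes x :: "'a::complex_hilbert"
  shows "hscale a (- x) = - hscale a x"
proof -
  have "hscale a x + hscale a (- x) = 0" using hscale_add_right[of a x "-x"] by simp
  then show ?thesis by (simp add: add_eq_0_iff)
qed
lemma hscale_diff_right:
  fixes x y :: "'a::complex_hilbert"
  shows "hscale a (x - y) = hscale a x - hscale a y"
  using hscale_add_right[of a x "-y"] hscale_minus_right[of a y] by simp
lemma hscale_zero_left[simp]:
  fixes x :: "'a::complex_hilbert"
  shows "hscale 0 x = 0"
  using hscale_of_real[of 0 x] by simp
lemma hscale_minus_left:
  fixes x :: "'a::complex_hilbert"
  shows "hscale (- a) x = - hscale a x"
proof -
  have "hscale a x + hscale (- a) x = 0" using hscale_add_left[of a "-a" x] by simp
  then show ?thesis by (simp add: add_eq_0_iff)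
qed
lemma hscale_diff_left:
  fixes x :: "'a::complex_hilbert"
  shows "hscale (a - b) x = hscale a x - hscale b x"
  using hscale_add_left[of a "-b" x] hscale_minus_left[of b x] by simp
lemma hscale_scaleR_right:
  fixes x :: "'a::complex_hilbert"
  shows "hscale a (r *\<^sub>R x) = r *\<^sub>R hscale a x"
  by (simp only: hscale_of_real[symmetric] hscale_hscale mult.commute)
lemma hscale_scaleR_left:
  fixes x :: "'a::complex_hilbert"
  shows "hscale (r *\<^sub>R a) x = r *\<^sub>R hscale a x"
  by (simp only: hscale_of_real[symmetric] hscale_hscale scaleR_conv_of_real)

lemma norm_hscale:
  fixes x :: "'a::complex_hilbert"
  shows "norm (hscale a x) = cmod a * norm x"
proof -
  have "complex_of_real ((norm (hscale a x))\<^sup>2) = hinner (hscale a x) (hscale a x)"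
    by (rule hinner_self_norm[symmetric])
  also have "\<dots> = (a * cnj a) * hinner x x"
    by (simp add: hinner_scale_left hinner_scale_right mult.assoc)
  also have "\<dots> = complex_of_real ((cmod a)\<^sup>2 * (norm x)\<^sup>2)"
    by (simp only: complex_norm_square[symmetric] hinner_self_norm of_real_mult)
  finally have "(norm (hscale a x))\<^sup>2 = (cmod a * norm x)\<^sup>2"
    unfolding power_mult_distrib using of_real_eq_iff by blast
  then show ?thesis by (simp add: power2_eq_iff_nonneg)
qed

lemma hinner_self_eq_0:
  fixes x :: "'a::complex_hilbert"
  shows "hinner x x = 0 \<longleftrightarrow> x = 0"
  by (simp add: hinner_self_norm)

lemma cauchy_schwarz:
  fixes x y :: "'a::complex_hilbert"
  shows "cmod (hinner x y) \<le> norm x * norm y"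
proof (cases "y = 0")
  case True then show ?thesis by simp
next
  case False
  define c where "c = hinner x y / hinner y y"
  have yy: "hinner y y \<noteq> 0" using False hinner_self_eq_0 by blast
  define u where "u = x - hscale c y"
  have uy: "hinner u y = 0" using yy by (simp add: u_def hinner_diff_left hinner_scale_left c_def)
  have yu: "hinner y u = 0" using uy hinner_commute[of u y] by simp
  have x: "x = u + hscale c y" by (simp add: u_def)
  have "hinner x x = hinner u u + (c * cnj c) * hinner y y"
    unfolding x by (simp add: hinner_add_left hinner_add_right hinner_scale_left hinner_scale_right uy yu mult.assoc)
  also have "\<dots> = complex_of_real ((norm u)\<^sup>2 + (cmod c)\<^sup>2 * (norm y)\<^sup>2)"
    by (simp only: complex_norm_square[symmetric] hinner_self_norm of_real_mult of_real_add)
  finally have "(norm x)\<^sup>2 = (norm u)\<^sup>2 + (cmod c)\<^sup>2 * (norm y)\<^sup>2"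
    unfolding hinner_self_norm using of_real_eq_iff by blast
  hence "(cmod c * norm y)\<^sup>2 \<le> (norm x)\<^sup>2" by (simp add: power_mult_distrib)
  hence le: "cmod c * norm y \<le> norm x" by (simp add: power2_le_iff_abs_le)
  have "cmod (hinner x y) = cmod c * (norm y * norm y)"
    using yy False by (simp add: c_def hinner_self_norm norm_divide power2_eq_square norm_mult)
  also have "\<dots> \<le> norm x * norm y"
    using mult_right_mono[OF le norm_ge_zero[of y]] by (simp add: mult.assoc)
  finally show ?thesis .
qed


lemma bounded_bilinear_hinner: "bounded_bilinear (hinner :: 'a::complex_hilbert \<Rightarrow> _)"
proof (rule bounded_bilinear.intro)
  fix a a' b b' :: 'a and r :: real
  show "hinner (a + a') b = hinner a b + hinner a' b" by (rule hinner_add_left)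
  show "hinner a (b + b') = hinner a b + hinner a b'" by (rule hinner_add_right)
  show "hinner (r *\<^sub>R a) b = r *\<^sub>R hinner a b" by (rule hinner_scaleR_left)
  show "hinner a (r *\<^sub>R b) = r *\<^sub>R hinner a b" by (rule hinner_scaleR_right)
  show "\<exists>K. \<forall>a b. norm (hinner (a::'a) b) \<le> norm a * norm b * K"
  proof (intro exI allI)
    fix a b :: 'a
    show "norm (hinner a b) \<le> norm a * norm b * 1" using cauchy_schwarz[of a b] by simp
  qed
qed

lemma bounded_bilinear_hscale: "bounded_bilinear (hscale :: complex \<Rightarrow> 'a::complex_hilbert \<Rightarrow> _)"
proof (rule bounded_bilinear.intro)
  fix a a' :: complex and b b' :: 'a and r :: real
  show "hscale (a + a') b = hscale a b + hscale a' b" by (rule hscale_add_left)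
  show "hscale a (b + b') = hscale a b + hscale a b'" by (rule hscale_add_right)
  show "hscale (r *\<^sub>R a) b = r *\<^sub>R hscale a b" by (rule hscale_scaleR_left)
  show "hscale a (r *\<^sub>R b) = r *\<^sub>R hscale a b" by (rule hscale_scaleR_right)
  show "\<exists>K. \<forall>a (b::'a). norm (hscale a b) \<le> norm a * norm b * K"
  proof (intro exI allI)
    fix a :: complex and b :: 'a
    show "norm (hscale a b) \<le> norm a * norm b * 1" using norm_hscale[of a b] by simp
  qed
qed



lemma oint_same[simp]: "oint a a f = 0"
  by (simp add: oint_def)

lemma oint_swap: "oint b a f = - oint a b f"
  by (cases "a = b") (auto simp: oint_def)

lemma oint_split:
  fixes f :: "real \<Rightarrow> 'b::banach"
  assumes f: "continuous_on UNIV f" and "c \<le> a" "c \<le> b"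
  shows "oint a b f = integral {c..b} f - integral {c..a} f"
proof (cases "a \<le> b")
  case True
  have "integral {c..a} f + integral {a..b} f = integral {c..b} f"
    by (rule Henstock_Kurzweil_Integration.integral_combine[where a=c and c=a and b=b and f=f]) (use assms True in \<open>auto intro: integrable_continuous_interval continuous_on_subset[OF f]\<close>)
  then show ?thesis using True by (simp add: oint_def algebra_simps)
next
  case False
  have "integral {c..b} f + integral {b..a} f = integral {c..a} f"
    by (rule Henstock_Kurzweil_Integration.integral_combine[where a=c and c=b and b=a and f=f]) (use assms False in \<open>auto intro: integrable_continuous_interval continuous_on_subset[OF f]\<close>)
  then show ?thesis using False by (simp add: oint_def algebra_simps)
qed

lemma oint_deriv_upper:
  fixes f :: "real \<Rightarrow> 'b::banach"
  assumes f: "continuous_on UNIV f"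
  shows "((\<lambda>x. oint a x f) has_vector_derivative f x) (at x)"
proof -
  define c where "c = min a x - 1"
  have "((\<lambda>u. integral {c..u} f) has_vector_derivative f x) (at x within {c..x+1})"
    by (rule integral_has_vector_derivative) (auto simp: c_def intro: continuous_on_subset[OF f])
  moreover have "at x within {c..x+1} = at x"
  proof (rule at_within_interior)
    have "c < x" unfolding c_def by arith
    then show "x \<in> interior {c..x+1}" by simp
  qed
  ultimately have "((\<lambda>u. integral {c..u} f) has_vector_derivative f x) (at x)"
    by simp
  hence "((\<lambda>u. integral {c..u} f - integral {c..a} f) has_vector_derivative f x) (at x)"
    by (rule has_vector_derivative_diff_const[THEN iffD2])
  then show ?thesis
    unfolding has_vector_derivative_def
    by (rule has_derivative_transform_within_open[where s="{c<..}"])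
       (auto simp: c_def intro!: oint_split[OF f, symmetric])
qed

lemma oint_deriv_lower:
  fixes f :: "real \<Rightarrow> 'b::banach"
  assumes f: "continuous_on UNIV f"
  shows "((\<lambda>x. oint x b f) has_vector_derivative - f x) (at x)"
  using has_vector_derivative_minus[OF oint_deriv_upper[OF f, of b x]]
  by (simp add: oint_swap[of _ b])

lemma oint_linear:
  fixes f :: "real \<Rightarrow> 'b::banach"
  assumes h: "bounded_linear h" and f: "continuous_on UNIV f"
  shows "h (oint a b f) = oint a b (\<lambda>x. h (f x))"
proof -
  have i: "f integrable_on {c..d}" for c d
    by (rule integrable_continuous_interval) (rule continuous_on_subset[OF f], simp)
  show ?thesis
    using integral_linear[OF i h] linear_neg[OF bounded_linear.linear[OF h]]
    by (simp add: oint_def o_def)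
qed

lemma ode_zero:
  fixes f g :: "real \<Rightarrow> complex"
  assumes df: "\<And>q. (f has_vector_derivative g q * f q) (at q)"
    and g: "continuous_on UNIV g" and ft: "f t = 0"
  shows "f q = 0"
proof -
  define G where "G x = oint t x g" for x
  have dG: "((\<lambda>x. - G x) has_vector_derivative - g x) (at x)" for x
    unfolding G_def by (intro has_vector_derivative_minus oint_deriv_upper g)
  have dE: "((\<lambda>x. exp (- G x)) has_vector_derivative (- g x) * exp (- G x)) (at x)" for x
    using field_vector_diff_chain_at[OF dG DERIV_exp] by (simp add: o_def)
  have dh: "((\<lambda>x. f x * exp (- G x)) has_derivative (\<lambda>h. 0)) (at x within UNIV)" for x
  proof -
    have "((\<lambda>x. f x * exp (- G x)) has_vector_derivative
            f x * ((- g x) * exp (- G x)) + (g x * f x) * exp (- G x)) (at x)"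
      by (rule has_vector_derivative_mult[OF df dE])
    then show ?thesis by (simp add: has_vector_derivative_def algebra_simps)
  qed
  have "f q * exp (- G q) = f t * exp (- G t)"
    by (rule has_derivative_zero_unique[OF convex_UNIV dh]) auto
  then show ?thesis using ft by simp
qed



theorem corollary6:
  fixes U :: "real \<Rightarrow> real \<Rightarrow> 'a::complex_hilbert \<Rightarrow> 'a"
    and t0 :: real and z :: 'a
    and K :: "real \<Rightarrow> real \<Rightarrow> complex"
  assumes bdd: "\<And>t s. bounded_clinear_op (U t s)"
    and strong_cont: "\<And>x. continuous_on UNIV (\<lambda>(t, s). U t s x)"
    and U_id: "\<And>t x. U t t x = x"
    and U_comp: "\<And>r s t x. U r s (U t r x) = U t s x"
    and z_dom: "z \<in> gen_dom_all U"
    and z_nz: "z \<noteq> 0"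
    and z_cont: "continuous_on UNIV (\<lambda>t. U t t0 (gen U t z))"
    and K_cont: "\<And>t. continuous_on UNIV (K t)"
    and K_eq: "\<And>t s.
      (let ip = (\<lambda>\<tau> x y. hinner (U \<tau> t0 x) (U \<tau> t0 y));
           Q = (\<lambda>\<tau> y. y - hscale (ip \<tau> y z / ip \<tau> z z) z)
       in K t s = - (ip s (U t s (Q t (gen U t z))) (Q s (gen U s z)) / ip s z z)
                  + oint s t (\<lambda>r. K t r * (ip s (U r s z) (Q s (gen U s z)) / ip s z z)))"
  shows "\<forall>t s.
      (let ip = (\<lambda>\<tau> x y. hinner (U \<tau> t0 x) (U \<tau> t0 y));
           Q = (\<lambda>\<tau> y. y - hscale (ip \<tau> y z / ip \<tau> z z) z);
           \<eta> = (\<lambda>t' s'. U t' s' (Q t' (gen U t' z)) - oint s' t' (\<lambda>r. hscale (K t' r) (U r s' z)))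
       in ip s (\<eta> t s) z = 0 \<and> K t s = - (hinner (\<eta> t t0) (\<eta> s t0) / ip s z z))"
proof -
  have lin: "bounded_linear (U t s)" for t s using bdd[of t s] by (simp add: bounded_clinear_op_def)
  have clin: "U t s (hscale c x) = hscale c (U t s x)" for t s c x
    using bdd[of t s] by (simp add: bounded_clinear_op_def)
  have Udiff: "U t s (x - y) = U t s x - U t s y" for t s x y
    using linear_diff[OF bounded_linear.linear[OF lin]] .
  have Uzero: "U t s 0 = 0" for t s
    using linear_0[OF bounded_linear.linear[OF lin]] .
  have UscaleR: "U t s (c *\<^sub>R x) = c *\<^sub>R U t s x" for t s c x
    using linear_scale[OF bounded_linear.linear[OF lin]] .
  have Ucont: "continuous_on UNIV (\<lambda>r. U r s x)" for s x
  proof -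
    have "continuous_on UNIV (\<lambda>r. (\<lambda>(t, s). U t s x) (r, s))"
      by (rule continuous_on_compose2[OF strong_cont[of x]]) (auto intro!: continuous_intros)
    then show ?thesis by simp
  qed
  have BB: "bounded_bilinear (hinner :: 'a \<Rightarrow> 'a \<Rightarrow> complex)" by (rule bounded_bilinear_hinner)
  have HS: "bounded_bilinear (hscale :: complex \<Rightarrow> 'a \<Rightarrow> 'a)" by (rule bounded_bilinear_hscale)

  define w where "w r = U r t0 z" for r
  define a where "a r = U r t0 (gen U r z)" for r
  define N where "N r = hinner (w r) (w r)" for r
  define v where "v r = a r - hscale (hinner (a r) (w r) / N r) (w r)" for r
  define F where "F t r = hscale (K t r) (w r)" for t r
  define e where "e t q = v t - oint q t (F t)" for t q

  have w_cont: "continuous_on UNIV w" unfolding w_def by (rule Ucont)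
  have a_cont: "continuous_on UNIV a" unfolding a_def by (rule z_cont)
  have w_nz: "w r \<noteq> 0" for r
  proof
    assume "w r = 0"
    hence "U t0 r (w r) = 0" by (simp add: Uzero)
    moreover have "U t0 r (w r) = z" unfolding w_def using U_comp[of t0 r r z] U_id by simp
    ultimately show False using z_nz by simp
  qed
  have N_nz: "N r \<noteq> 0" for r unfolding N_def using w_nz hinner_self_eq_0 by blast
  have N_cont: "continuous_on UNIV N" unfolding N_def
    by (rule bounded_bilinear.continuous_on[OF BB w_cont w_cont])
  have F_cont: "continuous_on UNIV (F t)" for t unfolding F_def
    by (rule bounded_bilinear.continuous_on[OF HS K_cont w_cont])
  have e_deriv: "((\<lambda>q. e t q) has_vector_derivative F t q) (at q)" for t q
    unfolding e_def
    by (rule has_vector_derivative_eq_rhs[OF has_vector_derivative_diff[OF has_vector_derivative_const oint_deriv_lower[OF F_cont]]]) simp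
  have w_deriv: "(w has_vector_derivative a q) (at q)" for q
  proof -
    from z_dom have "z \<in> gen_dom U q" by (simp add: gen_dom_all_def)
    then obtain l where l: "(diffq U q z \<longlongrightarrow> l) (at 0)" by (auto simp: gen_dom_def)
    hence "gen U q z = l" unfolding gen_def by (rule tendsto_Lim[OF trivial_limit_at])
    with l have "(diffq U q z \<longlongrightarrow> gen U q z) (at 0)" by simp
    hence "((\<lambda>h. U q t0 (diffq U q z h)) \<longlongrightarrow> a q) (at 0)"
      unfolding a_def by (rule bounded_linear.tendsto[OF lin])
    moreover have "U q t0 (diffq U q z h) = (1 / h) *\<^sub>R (w (q + h) - w q)" for h
      unfolding diffq_def w_def by (simp add: UscaleR Udiff U_comp)
    ultimately have D: "((\<lambda>h. (1 / h) *\<^sub>R (w (q + h) - w q)) \<longlongrightarrow> a q) (at 0)" by simp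
    have "((\<lambda>h. norm ((1 / h) *\<^sub>R (w (q + h) - w q) - a q)) \<longlongrightarrow> 0) (at 0)"
      by (rule tendsto_norm_zero[OF LIM_zero[OF D]])
    moreover have "\<forall>\<^sub>F h in at 0. norm ((1 / h) *\<^sub>R (w (q + h) - w q) - a q)
        = norm (w (q + h) - w q - h *\<^sub>R a q) / norm h"
    proof -
      have "norm ((1 / h) *\<^sub>R (w (q + h) - w q) - a q) = norm (w (q + h) - w q - h *\<^sub>R a q) / norm h"
        if "h \<noteq> 0" for h :: real
      proof -
        have "(1 / h) *\<^sub>R (w (q + h) - w q) - a q = (1 / h) *\<^sub>R (w (q + h) - w q - h *\<^sub>R a q)"
          using that by (simp add: scaleR_diff_right)
        then show ?thesis by (simp add: divide_inverse mult.commute)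
      qed
      then show ?thesis by (auto simp: eventually_at_filter)
    qed
    ultimately have "((\<lambda>h. norm (w (q + h) - w q - h *\<^sub>R a q) / norm h) \<longlongrightarrow> 0) (at 0)"
      by (rule Lim_transform_eventually)
    then show ?thesis
      unfolding has_vector_derivative_def has_derivative_at
      by (simp add: bounded_linear_scaleR_left)
  qed
  have vw: "hinner (v r) (w r) = 0" for r
    using N_nz[of r] by (simp add: v_def hinner_diff_left hinner_scale_left N_def)
  have UQ: "U \<tau> t0 (y - hscale (hinner (U \<tau> t0 y) (U \<tau> t0 z) / hinner (U \<tau> t0 z) (U \<tau> t0 z)) z)
      = U \<tau> t0 y - hscale (hinner (U \<tau> t0 y) (w \<tau>) / N \<tau>) (w \<tau>)" for \<tau> y
    by (simp add: Udiff clin w_def N_def)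
  have vQ: "U \<tau> t0 (gen U \<tau> z - hscale (hinner (a \<tau>) (w \<tau>) / N \<tau>) z) = v \<tau>" for \<tau>
    by (simp add: Udiff clin v_def a_def w_def)
  have Keq': "K t s * N s = - hinner (e t s) (v s)" for t s
  proof -
    have K1: "K t s = - (hinner (v t) (v s) / N s) + oint s t (\<lambda>r. K t r * (hinner (w r) (v s) / N s))"
      using K_eq[of t s] unfolding Let_def
      by (simp only: U_comp a_def[symmetric] w_def[symmetric] N_def[symmetric] vQ)
    have c1: "continuous_on UNIV (\<lambda>r. K t r * hinner (w r) (v s))"
      by (intro continuous_on_mult K_cont bounded_bilinear.continuous_on[OF BB w_cont] continuous_on_const)
    have o1: "oint s t (\<lambda>r. K t r * (hinner (w r) (v s) / N s)) = oint s t (\<lambda>r. K t r * hinner (w r) (v s)) / N s"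
      using oint_linear[OF bounded_linear_divide[of "N s"] c1, of s t] by simp
    have o2: "hinner (oint s t (F t)) (v s) = oint s t (\<lambda>r. K t r * hinner (w r) (v s))"
      using oint_linear[OF bounded_bilinear.bounded_linear_left[OF BB, of "v s"] F_cont[of t], of s t]
      by (simp add: F_def hinner_scale_left)
    have h1: "hinner (e t s) (v s) = hinner (v t) (v s) - oint s t (\<lambda>r. K t r * hinner (w r) (v s))"
      by (simp add: e_def hinner_diff_left o2)
    have h2: "K t s * N s = oint s t (\<lambda>r. K t r * hinner (w r) (v s)) - hinner (v t) (v s)"
      using N_nz[of s] unfolding K1 o1 by (simp add: divide_simps)
    show ?thesis unfolding h1 h2 by simp
  qed
  have claim1: "hinner (e t q) (w q) = 0" for t q
  proof -
    define g where "g q = cnj (hinner (a q) (w q) / N q)" for q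
    have g_cont: "continuous_on UNIV g" unfolding g_def
      by (intro bounded_linear.continuous_on[OF bounded_linear_cnj] continuous_on_divide
          bounded_bilinear.continuous_on[OF BB a_cont w_cont] N_cont) (simp add: N_nz)
    have df: "((\<lambda>q. hinner (e t q) (w q)) has_vector_derivative g q * hinner (e t q) (w q)) (at q)" for q
    proof -
      have "((\<lambda>q. hinner (e t q) (w q)) has_vector_derivative hinner (e t q) (a q) + hinner (F t q) (w q)) (at q)"
        by (rule bounded_bilinear.has_vector_derivative[OF BB e_deriv w_deriv])
      moreover have "hinner (e t q) (a q) + hinner (F t q) (w q) = g q * hinner (e t q) (w q)"
      proof -
        have av: "a q = v q + hscale (hinner (a q) (w q) / N q) (w q)" by (simp add: v_def)
        have "hinner (e t q) (a q) = hinner (e t q) (v q) + g q * hinner (e t q) (w q)"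
          by (subst av) (simp add: hinner_add_right hinner_scale_right g_def)
        moreover have "hinner (F t q) (w q) = - hinner (e t q) (v q)"
          using Keq'[of t q] by (simp add: F_def hinner_scale_left N_def)
        ultimately show ?thesis by simp
      qed
      ultimately show ?thesis by simp
    qed
    have "hinner (e t t) (w t) = 0" by (simp add: e_def vw)
    from ode_zero[OF df g_cont this] show ?thesis .
  qed
  have claim2: "hinner (e t s) (e s s) = hinner (e t t0) (e s t0)" for t s
  proof -
    have d: "((\<lambda>q. hinner (e t q) (e s q)) has_derivative (\<lambda>h. 0)) (at q within UNIV)" for q
    proof -
      have "((\<lambda>q. hinner (e t q) (e s q)) has_vector_derivative hinner (e t q) (F s q) + hinner (F t q) (e s q)) (at q)"
        by (rule bounded_bilinear.has_vector_derivative[OF BB e_deriv e_deriv])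
      moreover have "hinner (e t q) (F s q) + hinner (F t q) (e s q) = 0"
      proof -
        have "hinner (w q) (e s q) = 0" using claim1[of s q] hinner_commute[of "w q" "e s q"] by simp
        then show ?thesis using claim1[of t q] by (simp add: F_def hinner_scale_left hinner_scale_right)
      qed
      ultimately show ?thesis by (simp add: has_vector_derivative_def)
    qed
    show ?thesis by (rule has_derivative_zero_unique[OF convex_UNIV d]) auto
  qed
  have E2: "U t t0 (gen U t z - hscale (hinner (U t t0 (gen U t z)) (U t t0 z) / hinner (U t t0 z) (U t t0 z)) z)
      - oint t0 t (\<lambda>r. hscale (K t r) (U r t0 z)) = e t t0" for t
    by (simp only: a_def[symmetric] w_def[symmetric] N_def[symmetric] vQ F_def[symmetric] e_def)
  show ?thesis
  proof (intro allI)
    fix t s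
    have G_cont: "continuous_on UNIV (\<lambda>r. hscale (K t r) (U r s z))"
      by (rule bounded_bilinear.continuous_on[OF HS K_cont Ucont])
    have E1: "U s t0 (U t s (gen U t z - hscale (hinner (U t t0 (gen U t z)) (U t t0 z) / hinner (U t t0 z) (U t t0 z)) z)
        - oint s t (\<lambda>r. hscale (K t r) (U r s z))) = e t s"
    proof -
      have "U s t0 (oint s t (\<lambda>r. hscale (K t r) (U r s z))) = oint s t (F t)"
      proof -
        have Ft: "F t = (\<lambda>x. hscale (K t x) (U x t0 z))" by (simp add: fun_eq_iff F_def w_def)
        show ?thesis using oint_linear[OF lin[of s t0] G_cont, of s t] unfolding Ft by (simp add: clin U_comp)
      qed
      then show ?thesis
        by (simp only: Udiff[of s t0] U_comp a_def[symmetric] w_def[symmetric] N_def[symmetric] vQ e_def)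
    qed
    have ess: "e s s = v s" by (simp add: e_def)
    have fin1: "hinner (e t s) (w s) = 0" by (rule claim1)
    have fin2: "K t s = - (hinner (e t t0) (e s t0) / N s)"
      using Keq'[of t s] claim2[of t s] N_nz[of s] ess by (simp add: field_simps)
    show "let ip = (\<lambda>\<tau> x y. hinner (U \<tau> t0 x) (U \<tau> t0 y));
           Q = (\<lambda>\<tau> y. y - hscale (ip \<tau> y z / ip \<tau> z z) z);
           \<eta> = (\<lambda>t' s'. U t' s' (Q t' (gen U t' z)) - oint s' t' (\<lambda>r. hscale (K t' r) (U r s' z)))
       in ip s (\<eta> t s) z = 0 \<and> K t s = - (hinner (\<eta> t t0) (\<eta> s t0) / ip s z z)"
      unfolding Let_def
      apply (simp only: E1 E2)
      apply (simp only: w_def[symmetric] N_def[symmetric])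
      using fin1 fin2 by simp
  qed
qed

end
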